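(* Let $(f_n)$ be a sequence of finitary Boolean functions. The following are equivalent: (1) there exists a sequence of integers $r_n\to\infty$ such that for every integer sequence $(m_n)$ with $m_n\ge r_n$ for all $n$, the sequence $(B_{m_n}f_n)_n$ is noise sensitive; (2) $(f_n)$ is noise sensitive.
   Context: Let $\Omega=\{-1,1\}$ and $\Omega^\infty=\{-1,1\}^{\mathbb N}$ with the uniform product probability measure; $\omega$ denotes a uniformly random element. A Boolean function is a measurable map $f:\Omega^\infty\to\Omega$. A set $W\subseteq\mathbb N$ is a witness set for $f$ at $\omega$ if there is an event $A$ with $\mathbb P(A)=1$ such that for all $\tilde\omega\in A$: if $\tilde\omega_i=\omega_i$ for all $i\in W$ then $f(\tilde\omega)=f(\omega)$. $f$ is finitary if almost surely a finite witness set exists; then $W(f)(\omega)$ denotes the least finite witness set in the order: smaller maximum first, then smaller cardinality, then lexicographic. $B_mf=\mathbf 1_{\{W(f)\subseteq[m]\}}f-\mathbf 1_{\{W(f)\not\subseteq[m]\}}$. For $\epsilon\in[0,1]$, $\omega^\epsilon$ is obtained from $\omega$ by, independently for each coordinate, with probability $\epsilon$ replacing $\omega_i$ by a fresh uniform bit. A sequence $(g_n)$ of Boolean functions is noise sensitive if for every $\epsilon\in(0,1]$, $\mathbb E[g_n(\omega)g_n(\omega^\epsilon)]-\mathbb E[g_n(\omega)]^2\to0$. *)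

theory Defs
  imports "HOL-Probability.Probability"
begin

text \<open>Encoding: the two-point set {-1,1} is represented by bool, True = 1, False = -1.
  Coordinates are indexed by nat (starting at 0), so [m] = {..<m}.\<close>

definition pm :: "bool \<Rightarrow> real" where
  "pm b = (if b then 1 else -1)"

definition Omega :: "(nat \<Rightarrow> bool) measure" where
  "Omega = PiM UNIV (\<lambda>_. measure_pmf (pmf_of_set (UNIV :: bool set)))"

definition boolean_fun :: "((nat \<Rightarrow> bool) \<Rightarrow> bool) \<Rightarrow> bool" where
  "boolean_fun f \<longleftrightarrow> f \<in> Omega \<rightarrow>\<^sub>M count_space UNIV"

definition witness_set :: "((nat \<Rightarrow> bool) \<Rightarrow> bool) \<Rightarrow> nat set \<Rightarrow> (nat \<Rightarrow> bool) \<Rightarrow> bool" where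
  "witness_set f W \<omega> \<longleftrightarrow>
     (\<exists>A \<in> sets Omega. measure Omega A = 1 \<and>
        (\<forall>\<omega>' \<in> A. (\<forall>i \<in> W. \<omega>' i = \<omega> i) \<longrightarrow> f \<omega>' = f \<omega>))"

definition finitary :: "((nat \<Rightarrow> bool) \<Rightarrow> bool) \<Rightarrow> bool" where
  "finitary f \<longleftrightarrow> (AE \<omega> in Omega. \<exists>W. finite W \<and> witness_set f W \<omega>)"

definition max_key :: "nat set \<Rightarrow> nat" where
  "max_key W = (if W = {} then 0 else Suc (Max W))"

definition set_less :: "nat set \<Rightarrow> nat set \<Rightarrow> bool" where
  "set_less V W \<longleftrightarrow>
     max_key V < max_key W \<or>
     (max_key V = max_key W \<and>
       (card V < card W \<or>
        (card V = card W \<and>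
          (sorted_list_of_set V, sorted_list_of_set W) \<in> lexord {(a, b). a < b})))"

text \<open>Least finite witness set W(f)(omega); on the (null) event where no finite
  witness set exists we use the default UNIV.\<close>
definition least_witness :: "((nat \<Rightarrow> bool) \<Rightarrow> bool) \<Rightarrow> (nat \<Rightarrow> bool) \<Rightarrow> nat set" where
  "least_witness f \<omega> =
     (if \<exists>W. finite W \<and> witness_set f W \<omega>
      then (THE W. finite W \<and> witness_set f W \<omega> \<and>
              (\<forall>V. finite V \<and> witness_set f V \<omega> \<longrightarrow> V = W \<or> set_less W V))
      else UNIV)"

text \<open>B_m f = 1{W(f) \<subseteq> [m]} f - 1{W(f) not \<subseteq> [m]}  (False encodes -1).\<close>
definition B :: "nat \<Rightarrow> ((nat \<Rightarrow> bool) \<Rightarrow> bool) \<Rightarrow> (nat \<Rightarrow> bool) \<Rightarrow> bool" where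
  "B m f \<omega> = (if least_witness f \<omega> \<subseteq> {..<m} then f \<omega> else False)"

definition noise_pmf :: "real \<Rightarrow> (bool \<times> bool) pmf" where
  "noise_pmf \<epsilon> =
     do { x \<leftarrow> pmf_of_set (UNIV :: bool set);
          b \<leftarrow> bernoulli_pmf \<epsilon>;
          y \<leftarrow> pmf_of_set (UNIV :: bool set);
          return_pmf (x, if b then y else x) }"

definition Noise :: "real \<Rightarrow> (nat \<Rightarrow> bool \<times> bool) measure" where
  "Noise \<epsilon> = PiM UNIV (\<lambda>_. measure_pmf (noise_pmf \<epsilon>))"

definition noise_sensitive :: "(nat \<Rightarrow> (nat \<Rightarrow> bool) \<Rightarrow> bool) \<Rightarrow> bool" where
  "noise_sensitive g \<longleftrightarrow>
     (\<forall>\<epsilon>::real. 0 < \<epsilon> \<and> \<epsilon> \<le> 1 \<longrightarrow>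
        (\<lambda>n. (\<integral>x. pm (g n (\<lambda>i. fst (x i))) * pm (g n (\<lambda>i. snd (x i))) \<partial>Noise \<epsilon>)
              - (\<integral>\<omega>. pm (g n \<omega>) \<partial>Omega)\<^sup>2) \<longlonglongrightarrow> 0)"

end

theory Submission
  imports Defs "HOL-Library.List_Lexorder"
begin


abbreviation U :: "bool measure" where "U \<equiv> measure_pmf (pmf_of_set (UNIV :: bool set))"

lemma map_fst_noise: "map_pmf fst (noise_pmf e) = pmf_of_set UNIV"
  unfolding noise_pmf_def by (simp add: map_bind_pmf bind_return_pmf' bind_pmf_const)

lemma map_snd_noise: "map_pmf snd (noise_pmf e) = pmf_of_set UNIV"
proof -
  have "map_pmf snd (noise_pmf e) = 
     do {b \<leftarrow> bernoulli_pmf e; x \<leftarrow> pmf_of_set (UNIV :: bool set); y \<leftarrow> pmf_of_set (UNIV :: bool set);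
          return_pmf (if b then y else x)}"
    unfolding noise_pmf_def by (simp add: map_bind_pmf bind_commute_pmf[of "pmf_of_set UNIV" "bernoulli_pmf e"])
  also have "\<dots> = do {b \<leftarrow> bernoulli_pmf e; pmf_of_set UNIV}"
  proof (intro bind_pmf_cong refl)
    fix b :: bool
    show "do {x \<leftarrow> pmf_of_set (UNIV :: bool set); y \<leftarrow> pmf_of_set (UNIV :: bool set);
          return_pmf (if b then y else x)} = pmf_of_set UNIV"
      by (cases b) (simp_all add: bind_return_pmf' bind_pmf_const)
  qed
  finally show ?thesis by (simp add: bind_pmf_const)
qed

interpretation PO: product_prob_space "\<lambda>_::nat. U" "UNIV :: nat set"
  by (rule product_prob_spaceI) (simp add: prob_space_measure_pmf)

lemma space_Omega[simp]: "space Omega = UNIV"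
  by (simp add: Omega_def space_PiM)

lemma prob_Omega: "prob_space Omega"
  unfolding Omega_def by (rule PO.P.prob_space_axioms)

lemma comp_meas[measurable]: "(\<lambda>x. x i) \<in> Omega \<rightarrow>\<^sub>M count_space UNIV"
  unfolding Omega_def
  by (rule measurable_compose[OF measurable_component_singleton]) auto

lemma space_Noise[simp]: "space (Noise e) = UNIV"
  by (simp add: Noise_def space_PiM)

lemma marg:
  assumes g: "map_pmf g (noise_pmf e) = pmf_of_set UNIV"
  shows "distr (Noise e) Omega (\<lambda>x i. g (x i)) = Omega"
proof -
  interpret PN: product_prob_space "\<lambda>_::nat. measure_pmf (noise_pmf e)" "UNIV :: nat set"
    by (rule product_prob_spaceI) (simp add: prob_space_measure_pmf)
  have meas: "(\<lambda>x i. g (x i)) \<in> Noise e \<rightarrow>\<^sub>M Omega"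
    unfolding Noise_def Omega_def
    by (rule measurable_PiM_single') (auto simp: space_PiM)
  show ?thesis
    unfolding Omega_def
  proof (rule PO.PiM_eq)
    show "sets (distr (Noise e) (Pi\<^sub>M UNIV (\<lambda>_. U)) (\<lambda>x i. g (x i))) = sets (Pi\<^sub>M UNIV (\<lambda>_. U))"
      by simp
    fix J :: "nat set" and F assume J: "finite J" "J \<subseteq> UNIV" "\<And>j. j \<in> J \<Longrightarrow> F j \<in> sets U"
    have pre: "(\<lambda>x i. g (x i)) -` prod_emb UNIV (\<lambda>_. U) J (Pi\<^sub>E J F) \<inter> space (Noise e)
       = prod_emb UNIV (\<lambda>_. measure_pmf (noise_pmf e)) J (Pi\<^sub>E J (\<lambda>j. g -` F j))"
      by (auto simp: prod_emb_def PiE_iff space_PiM)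
    have "emeasure (distr (Noise e) (Pi\<^sub>M UNIV (\<lambda>_. U)) (\<lambda>x i. g (x i))) (prod_emb UNIV (\<lambda>_. U) J (Pi\<^sub>E J F))
        = emeasure (Noise e) ((\<lambda>x i. g (x i)) -` prod_emb UNIV (\<lambda>_. U) J (Pi\<^sub>E J F) \<inter> space (Noise e))"
      using meas J by (intro emeasure_distr) (auto simp: Omega_def intro!: sets_PiM_I)
    also have "\<dots> = emeasure (Noise e) (prod_emb UNIV (\<lambda>_. measure_pmf (noise_pmf e)) J (Pi\<^sub>E J (\<lambda>j. g -` F j)))"
      using pre by simp
    also have "\<dots> = (\<Prod>j\<in>J. emeasure (measure_pmf (noise_pmf e)) (g -` F j))"
      unfolding Noise_def using J by (intro PN.emeasure_PiM_emb) auto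
    also have "\<dots> = (\<Prod>j\<in>J. emeasure U (F j))"
      by (intro prod.cong refl) (metis emeasure_map_pmf g)
    finally show "emeasure (distr (Noise e) (Pi\<^sub>M UNIV (\<lambda>_. U)) (\<lambda>x i. g (x i))) (prod_emb UNIV (\<lambda>_. U) J (Pi\<^sub>E J F)) = (\<Prod>j\<in>J. emeasure U (F j))" .
  qed
qed



lemma max_key_sub: "finite V \<Longrightarrow> V \<subseteq> {..<m} \<longleftrightarrow> max_key V \<le> m"
  by (cases "V = {}") (auto simp: max_key_def Suc_le_eq Max_less_iff)

lemma set_less_alt: "set_less V W \<longleftrightarrow>
     max_key V < max_key W \<or> (max_key V = max_key W \<and>
       (card V < card W \<or> (card V = card W \<and> sorted_list_of_set V < sorted_list_of_set W)))"
  by (simp add: set_less_def list_less_def)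

lemma set_less_max: "set_less V W \<Longrightarrow> max_key V \<le> max_key W"
  by (auto simp: set_less_def)

lemma set_less_asym: "set_less V W \<Longrightarrow> set_less W V \<Longrightarrow> False"
  by (auto simp: set_less_alt)

lemma least_ex:
  assumes ne: "S \<noteq> {}" and fin: "\<forall>V\<in>S. finite V"
  shows "\<exists>!L. L \<in> S \<and> (\<forall>V\<in>S. V = L \<or> set_less L V)"
proof -
  define k where "k = (LEAST k. \<exists>V\<in>S. max_key V = k)"
  have ex1: "\<exists>V\<in>S. max_key V = k" unfolding k_def
  proof (rule LeastI_ex[where P="\<lambda>k. \<exists>V\<in>S. max_key V = k"])
    obtain V where "V \<in> S" using ne by blast
    then show "\<exists>k. \<exists>V\<in>S. max_key V = k" by blast
  qed
  have kle: "\<And>V. V \<in> S \<Longrightarrow> k \<le> max_key V" unfolding k_def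
    by (rule Least_le[where P="\<lambda>k. \<exists>V\<in>S. max_key V = k"]) blast
  define S1 where "S1 = {V\<in>S. max_key V = k}"
  define c where "c = (LEAST c. \<exists>V\<in>S1. card V = c)"
  have ex2: "\<exists>V\<in>S1. card V = c" unfolding c_def
  proof (rule LeastI_ex[where P="\<lambda>c. \<exists>V\<in>S1. card V = c"])
    obtain V where "V \<in> S1" using ex1 S1_def by blast
    then show "\<exists>c. \<exists>V\<in>S1. card V = c" by blast
  qed
  have cle: "\<And>V. V \<in> S1 \<Longrightarrow> c \<le> card V" unfolding c_def
    by (rule Least_le[where P="\<lambda>c. \<exists>V\<in>S1. card V = c"]) blast
  define S2 where "S2 = {V\<in>S1. card V = c}"
  have S2ne: "S2 \<noteq> {}" using ex2 S2_def by auto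
  have "S2 \<subseteq> Pow {..<k}"
  proof
    fix V assume "V \<in> S2"
    then have "finite V" "max_key V = k" using fin by (auto simp: S2_def S1_def)
    then show "V \<in> Pow {..<k}" using max_key_sub[of V k] by simp
  qed
  then have S2fin: "finite S2" by (rule finite_subset) auto
  define l where "l = Min (sorted_list_of_set ` S2)"
  have "l \<in> sorted_list_of_set ` S2" unfolding l_def using S2fin S2ne by (intro Min_in) auto
  then obtain L where L: "L \<in> S2" "sorted_list_of_set L = l" by auto
  have lle: "\<And>V. V \<in> S2 \<Longrightarrow> l \<le> sorted_list_of_set V" unfolding l_def using S2fin by (intro Min_le) auto
  have Lp: "\<forall>V\<in>S. V = L \<or> set_less L V"
  proof
    fix V assume V: "V \<in> S"
    have LS: "L \<in> S" "max_key L = k" "card L = c" using L by (auto simp: S2_def S1_def)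
    show "V = L \<or> set_less L V"
    proof (cases "max_key V = k")
      case False
      then have "max_key L < max_key V" using kle[OF V] LS(2) by linarith
      then show ?thesis unfolding set_less_alt by blast
    next
      case True
      then have V1: "V \<in> S1" using V by (auto simp: S1_def)
      show ?thesis
      proof (cases "card V = c")
        case False
        then have "max_key L = max_key V" "card L < card V" using cle[OF V1] LS(2,3) True by linarith+
        then show ?thesis unfolding set_less_alt by blast
      next
        case True2: True
        then have V2: "V \<in> S2" using V1 by (auto simp: S2_def)
        have "l \<le> sorted_list_of_set V" by (rule lle[OF V2])
        then have "l = sorted_list_of_set V \<or> l < sorted_list_of_set V" by auto
        then show ?thesis
        proof
          assume "l = sorted_list_of_set V"
          then have "set (sorted_list_of_set L) = set (sorted_list_of_set V)" using L by simp
          then have "L = V" using fin V LS by simp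
          then show ?thesis by simp
        next
          assume "l < sorted_list_of_set V"
          moreover have "max_key L = max_key V" "card L = card V"
            using LS(2,3) True True2 by linarith+
          ultimately have "max_key L = max_key V" "card L = card V" "sorted_list_of_set L < sorted_list_of_set V"
            using L(2) by simp_all
          then show ?thesis unfolding set_less_alt by blast
        qed
      qed
    qed
  qed
  show ?thesis
  proof (rule ex1I[of _ L])
    show "L \<in> S \<and> (\<forall>V\<in>S. V = L \<or> set_less L V)" using Lp L by (auto simp: S2_def S1_def)
  next
    fix L' assume L': "L' \<in> S \<and> (\<forall>V\<in>S. V = L' \<or> set_less L' V)"
    have LS: "L \<in> S" using L by (auto simp: S2_def S1_def)
    have a: "L = L' \<or> set_less L' L" using L' LS by blast
    have b: "L' = L \<or> set_less L L'" using Lp L' by blast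
    show "L' = L" using a b set_less_asym by metis
  qed
qed

lemma lw_sub: "least_witness f \<omega> \<subseteq> {..<m} \<longleftrightarrow> (\<exists>W\<subseteq>{..<m}. witness_set f W \<omega>)"
proof (cases "\<exists>W. finite W \<and> witness_set f W \<omega>")
  case False
  have "\<not> UNIV \<subseteq> {..<m}" by auto
  moreover have "\<not> (\<exists>W\<subseteq>{..<m}. witness_set f W \<omega>)"
    using False finite_nat_iff_bounded by blast
  moreover have "least_witness f \<omega> = UNIV"
    unfolding least_witness_def by (rule if_not_P[OF False])
  ultimately show ?thesis by simp
next
  case True
  let ?S = "{W. finite W \<and> witness_set f W \<omega>}"
  have "\<exists>!L. L \<in> ?S \<and> (\<forall>V\<in>?S. V = L \<or> set_less L V)"
    using True by (intro least_ex) auto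
  then have "\<exists>!L. finite L \<and> witness_set f L \<omega> \<and> (\<forall>V. finite V \<and> witness_set f V \<omega> \<longrightarrow> V = L \<or> set_less L V)"
    by simp
  from theI'[OF this] have th: "finite (least_witness f \<omega>) \<and> witness_set f (least_witness f \<omega>) \<omega> \<and>
     (\<forall>V. finite V \<and> witness_set f V \<omega> \<longrightarrow> V = least_witness f \<omega> \<or> set_less (least_witness f \<omega>) V)"
    using True unfolding least_witness_def by simp
  show ?thesis
  proof
    assume "least_witness f \<omega> \<subseteq> {..<m}" then show "\<exists>W\<subseteq>{..<m}. witness_set f W \<omega>" using th by blast
  next
    assume "\<exists>W\<subseteq>{..<m}. witness_set f W \<omega>"
    then obtain W where W: "W \<subseteq> {..<m}" "witness_set f W \<omega>" by blast
    have fW: "finite W" using W(1) finite_subset by blast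
    have "W = least_witness f \<omega> \<or> set_less (least_witness f \<omega>) W" using th fW W(2) by blast
    then have "max_key (least_witness f \<omega>) \<le> max_key W"
      using set_less_max by auto
    also have "\<dots> \<le> m" using max_key_sub[OF fW] W(1) by simp
    finally show "least_witness f \<omega> \<subseteq> {..<m}" using max_key_sub[of "least_witness f \<omega>" m] th by blast
  qed
qed



interpretation PW: prob_space Omega by (rule prob_Omega)

lemma wit_AE: "witness_set f W \<omega> \<longleftrightarrow> (AE \<omega>' in Omega. (\<forall>i\<in>W. \<omega>' i = \<omega> i) \<longrightarrow> f \<omega>' = f \<omega>)"
proof
  assume "witness_set f W \<omega>"
  then obtain A where A: "A \<in> sets Omega" "measure Omega A = 1"
    "\<forall>\<omega>' \<in> A. (\<forall>i \<in> W. \<omega>' i = \<omega> i) \<longrightarrow> f \<omega>' = f \<omega>" unfolding witness_set_def by blast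
  have "PW.prob (space Omega - A) = 0" using A PW.prob_compl by simp
  then have "emeasure Omega (space Omega - A) = 0" using A by (simp add: PW.emeasure_eq_measure)
  moreover have "{x \<in> space Omega. \<not> x \<in> A} = space Omega - A" by blast
  moreover have "space Omega - A \<in> sets Omega" using A(1) by blast
  ultimately have "AE x in Omega. x \<in> A" using AE_iff_measurable[of "space Omega - A" Omega "\<lambda>x. x \<in> A"] by blast
  then show "AE \<omega>' in Omega. (\<forall>i\<in>W. \<omega>' i = \<omega> i) \<longrightarrow> f \<omega>' = f \<omega>"
    by eventually_elim (use A in auto)
next
  assume "AE \<omega>' in Omega. (\<forall>i\<in>W. \<omega>' i = \<omega> i) \<longrightarrow> f \<omega>' = f \<omega>"
  then obtain S where "S \<subseteq> {x \<in> space Omega. (\<forall>i\<in>W. x i = \<omega> i) \<longrightarrow> f x = f \<omega>}" "S \<in> sets Omega" "measure Omega S = 1"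
    by (rule PW.AE_E_prob)
  then show "witness_set f W \<omega>" unfolding witness_set_def by blast
qed

definition kap :: "nat \<Rightarrow> (nat \<Rightarrow> bool) \<Rightarrow> bool list" where "kap m \<omega> = map \<omega> [0..<m]"

lemma cyl1: "{\<omega>. \<omega> i = c} \<in> sets Omega"
proof -
  have "(\<lambda>\<omega>. \<omega> i) -` {c} \<inter> space Omega \<in> sets Omega"
    using comp_meas[of i] by (rule measurable_sets) auto
  then show ?thesis by (simp add: vimage_def)
qed

lemma pred_cyl: "{\<omega>. \<forall>i\<in>{..<m}. \<omega> i = xs ! i} \<in> sets Omega"
proof -
  have "{\<omega>. \<forall>i\<in>{..<m}. \<omega> i = xs ! i} = space Omega \<inter> (\<Inter>i\<in>{..<m}. {\<omega>. \<omega> i = xs ! i})" by auto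
  also have "\<dots> \<in> sets Omega"
  proof (cases "m = 0")
    case True then show ?thesis using sets.top[of Omega] by simp
  next
    case False then show ?thesis using cyl1 by (intro sets.Int sets.top sets.finite_INT) auto
  qed
  finally show ?thesis .
qed

lemma kap_eq: "kap m \<omega> = xs \<longleftrightarrow> (length xs = m \<and> (\<forall>i\<in>{..<m}. \<omega> i = xs ! i))"
proof
  assume "kap m \<omega> = xs"
  then show "length xs = m \<and> (\<forall>i\<in>{..<m}. \<omega> i = xs ! i)" unfolding kap_def by auto
next
  assume a: "length xs = m \<and> (\<forall>i\<in>{..<m}. \<omega> i = xs ! i)"
  show "kap m \<omega> = xs" unfolding kap_def
    by (rule nth_equalityI) (use a in auto)
qed

lemma kap_meas: "kap m \<in> Omega \<rightarrow>\<^sub>M count_space UNIV"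
proof (subst measurable_count_space_eq2_countable, intro conjI ballI)
  fix xs :: "bool list" 
  have "kap m -` {xs} \<inter> space Omega = (if length xs = m then {\<omega>. \<forall>i\<in>{..<m}. \<omega> i = xs ! i} else {})"
    by (simp add: vimage_def kap_eq)
  then show "kap m -` {xs} \<inter> space Omega \<in> sets Omega"
    using pred_cyl[of m xs] by simp
qed auto

lemma pair_meas: assumes "boolean_fun f" shows "(\<lambda>\<omega>. (kap m \<omega>, f \<omega>)) \<in> Omega \<rightarrow>\<^sub>M count_space UNIV"
proof (subst measurable_count_space_eq2_countable, intro conjI ballI)
  fix p :: "bool list \<times> bool" 
  have "(\<lambda>\<omega>. (kap m \<omega>, f \<omega>)) -` {p} \<inter> space Omega = (kap m -` {fst p} \<inter> space Omega) \<inter> (f -` {snd p} \<inter> space Omega)"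
    by (cases p) auto
  moreover have "kap m -` {fst p} \<inter> space Omega \<in> sets Omega" using kap_meas by (rule measurable_sets) auto
  moreover have "f -` {snd p} \<inter> space Omega \<in> sets Omega" using assms unfolding boolean_fun_def by (rule measurable_sets) auto
  ultimately show "(\<lambda>\<omega>. (kap m \<omega>, f \<omega>)) -` {p} \<inter> space Omega \<in> sets Omega" by auto
qed auto

definition Hm :: "((nat \<Rightarrow> bool) \<Rightarrow> bool) \<Rightarrow> nat \<Rightarrow> bool list \<times> bool \<Rightarrow> bool" where
  "Hm f m p = (\<exists>W\<subseteq>{..<m}. AE \<omega>' in Omega. (\<forall>i\<in>W. \<omega>' i = fst p ! i) \<longrightarrow> f \<omega>' = snd p)"

lemma E_Hm: "(\<exists>W\<subseteq>{..<m}. witness_set f W \<omega>) \<longleftrightarrow> Hm f m (kap m \<omega>, f \<omega>)"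
proof -
  have "\<And>W. W \<subseteq> {..<m} \<Longrightarrow> witness_set f W \<omega> \<longleftrightarrow> (AE \<omega>' in Omega. (\<forall>i\<in>W. \<omega>' i = kap m \<omega> ! i) \<longrightarrow> f \<omega>' = f \<omega>)"
  proof -
    fix W assume W: "W \<subseteq> {..<m}"
    have "\<And>\<omega>'. (\<forall>i\<in>W. \<omega>' i = kap m \<omega> ! i) \<longleftrightarrow> (\<forall>i\<in>W. \<omega>' i = \<omega> i)"
      using W by (auto simp: kap_def)
    then show "witness_set f W \<omega> \<longleftrightarrow> (AE \<omega>' in Omega. (\<forall>i\<in>W. \<omega>' i = kap m \<omega> ! i) \<longrightarrow> f \<omega>' = f \<omega>)"
      by (simp add: wit_AE)
  qed
  then show ?thesis unfolding Hm_def by auto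
qed

lemma E_sets: assumes "boolean_fun f" shows "{\<omega>. \<exists>W\<subseteq>{..<m}. witness_set f W \<omega>} \<in> sets Omega"
proof -
  have "{\<omega>. \<exists>W\<subseteq>{..<m}. witness_set f W \<omega>} = (\<lambda>\<omega>. (kap m \<omega>, f \<omega>)) -` {p. Hm f m p} \<inter> space Omega"
    by (rule set_eqI) (simp add: E_Hm)
  also have "\<dots> \<in> sets Omega" using pair_meas[OF assms] by (rule measurable_sets) auto
  finally show ?thesis .
qed

lemma B_alt: "B m f \<omega> = (if (\<exists>W\<subseteq>{..<m}. witness_set f W \<omega>) then f \<omega> else False)"
  by (simp add: B_def lw_sub)

lemma B_meas: assumes "boolean_fun f" shows "boolean_fun (B m f)"
proof -
  have "B m f = (\<lambda>p. if Hm f m p then snd p else False) \<circ> (\<lambda>\<omega>. (kap m \<omega>, f \<omega>))"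
    by (rule ext) (simp add: B_alt E_Hm)
  then show ?thesis unfolding boolean_fun_def
    using measurable_comp[OF pair_meas[OF assms] measurable_count_space] by simp
qed



lemma proj_meas: "(\<lambda>x i. g (x i)) \<in> Noise e \<rightarrow>\<^sub>M Omega"
  unfolding Noise_def Omega_def
  by (rule measurable_PiM_single') (auto simp: space_PiM)

lemma prob_Noise: "prob_space (Noise e)"
proof -
  interpret PN: product_prob_space "\<lambda>_::nat. measure_pmf (noise_pmf e)" "UNIV :: nat set"
    by (rule product_prob_spaceI) (simp add: prob_space_measure_pmf)
  show ?thesis unfolding Noise_def by (rule PN.P.prob_space_axioms)
qed

lemma pm_abs[simp]: "\<bar>pm b\<bar> = 1" by (simp add: pm_def)

lemma pm_meas: "boolean_fun g \<Longrightarrow> (\<lambda>\<omega>. pm (g \<omega>)) \<in> borel_measurable Omega"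
  unfolding boolean_fun_def
  by (rule measurable_compose[of g _ "count_space UNIV"]) auto

lemma int_ind_proj:
  assumes D: "D \<in> sets Omega" and g: "map_pmf g (noise_pmf e) = pmf_of_set UNIV"
  shows "(\<integral>x. indicator D (\<lambda>i. g (x i)) \<partial>Noise e) = measure Omega D"
proof -
  have "(\<integral>x. indicator D (\<lambda>i. g (x i)) \<partial>Noise e) = integral\<^sup>L (distr (Noise e) Omega (\<lambda>x i. g (x i))) (indicator D :: _ \<Rightarrow> real)"
    using D by (subst integral_distr[OF proj_meas]) auto
  also have "\<dots> = integral\<^sup>L Omega (indicator D)" using marg[OF g] by simp
  also have "\<dots> = measure Omega D" using D by (simp add: PW.emeasure_eq_measure)
  finally show ?thesis .
qed

definition corr :: "real \<Rightarrow> ((nat \<Rightarrow> bool) \<Rightarrow> bool) \<Rightarrow> real" where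
  "corr e h = (\<integral>x. pm (h (\<lambda>i. fst (x i))) * pm (h (\<lambda>i. snd (x i))) \<partial>Noise e) - (\<integral>\<omega>. pm (h \<omega>) \<partial>Omega)\<^sup>2"

lemma ns_corr: "noise_sensitive g \<longleftrightarrow> (\<forall>e::real. 0 < e \<and> e \<le> 1 \<longrightarrow> (\<lambda>n. corr e (g n)) \<longlonglongrightarrow> 0)"
  unfolding noise_sensitive_def corr_def by simp



lemma pw1: "\<bar>pm a - pm c\<bar> \<le> 2 * (if a = c then 0 else 1)"
  by (cases a; cases c) (simp_all add: pm_def)

lemma pw2: "\<bar>pm a * pm b - pm c * pm d\<bar> \<le> 2 * (if a = c then 0 else 1) + 2 * (if b = d then 0 else 1)"
  by (cases a; cases b; cases c; cases d) (simp_all add: pm_def)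

lemma ind_ge: assumes "\<forall>\<omega>. g \<omega> \<noteq> h \<omega> \<longrightarrow> \<omega> \<in> D"
  shows "(if g \<omega> = h \<omega> then 0 else 1) \<le> (indicator D \<omega> :: real)"
  using assms by (auto simp: indicator_def)

lemma int_pm: assumes "boolean_fun g" shows "integrable Omega (\<lambda>\<omega>. pm (g \<omega>))"
  by (rule PW.integrable_const_bound[where B=1]) (auto intro: pm_meas[OF assms])

lemma abs_int_pm: "\<bar>\<integral>\<omega>. pm (g \<omega>) \<partial>Omega\<bar> \<le> 1"
proof -
  have "\<bar>\<integral>\<omega>. pm (g \<omega>) \<partial>Omega\<bar> \<le> (\<integral>\<omega>. \<bar>pm (g \<omega>)\<bar> \<partial>Omega)" by (rule integral_abs_bound)
  also have "\<dots> = 1" using PW.prob_space by simp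
  finally show ?thesis .
qed

lemma exp_close:
  assumes g: "boolean_fun g" and h: "boolean_fun h" and D: "D \<in> sets Omega"
    and sub: "\<forall>\<omega>. g \<omega> \<noteq> h \<omega> \<longrightarrow> \<omega> \<in> D"
  shows "\<bar>(\<integral>\<omega>. pm (g \<omega>) \<partial>Omega) - (\<integral>\<omega>. pm (h \<omega>) \<partial>Omega)\<bar> \<le> 2 * measure Omega D"
proof -
  have "(\<integral>\<omega>. pm (g \<omega>) \<partial>Omega) - (\<integral>\<omega>. pm (h \<omega>) \<partial>Omega) = (\<integral>\<omega>. pm (g \<omega>) - pm (h \<omega>) \<partial>Omega)"
    using int_pm[OF g] int_pm[OF h] by (rule Bochner_Integration.integral_diff[symmetric])
  also have "\<bar>\<dots>\<bar> \<le> (\<integral>\<omega>. \<bar>pm (g \<omega>) - pm (h \<omega>)\<bar> \<partial>Omega)" by (rule integral_abs_bound)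
  also have "\<dots> \<le> (\<integral>\<omega>. 2 * indicator D \<omega> \<partial>Omega)"
  proof (rule integral_mono)
    show "integrable Omega (\<lambda>\<omega>. \<bar>pm (g \<omega>) - pm (h \<omega>)\<bar>)"
      using int_pm[OF g] int_pm[OF h] by auto
    show "integrable Omega (\<lambda>\<omega>. 2 * indicator D \<omega> :: real)"
      using D by (intro integrable_mult_right integrable_real_indicator) (auto simp: PW.emeasure_eq_measure)
    fix \<omega> show "\<bar>pm (g \<omega>) - pm (h \<omega>)\<bar> \<le> 2 * indicator D \<omega>"
      using pw1[of "g \<omega>" "h \<omega>"] ind_ge[OF sub, of \<omega>] by linarith
  qed
  also have "\<dots> = 2 * measure Omega D" using D by (simp add: PW.emeasure_eq_measure)
  finally show ?thesis .
qed

lemma noise_close: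
  assumes g: "boolean_fun g" and h: "boolean_fun h" and D: "D \<in> sets Omega"
    and sub: "\<forall>\<omega>. g \<omega> \<noteq> h \<omega> \<longrightarrow> \<omega> \<in> D"
  shows "\<bar>(\<integral>x. pm (g (\<lambda>i. fst (x i))) * pm (g (\<lambda>i. snd (x i))) \<partial>Noise e)
        - (\<integral>x. pm (h (\<lambda>i. fst (x i))) * pm (h (\<lambda>i. snd (x i))) \<partial>Noise e)\<bar> \<le> 4 * measure Omega D"
proof -
  interpret N: prob_space "Noise e" by (rule prob_Noise)
  have mg: "(\<lambda>x. pm (g (\<lambda>i. p (x i)))) \<in> borel_measurable (Noise e)" for p :: "bool \<times> bool \<Rightarrow> bool"
    by (rule measurable_compose[OF proj_meas pm_meas[OF g]])
  have mh: "(\<lambda>x. pm (h (\<lambda>i. p (x i)))) \<in> borel_measurable (Noise e)" for p :: "bool \<times> bool \<Rightarrow> bool"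
    by (rule measurable_compose[OF proj_meas pm_meas[OF h]])
  have ig: "integrable (Noise e) (\<lambda>x. pm (g (\<lambda>i. fst (x i))) * pm (g (\<lambda>i. snd (x i))))"
    by (rule N.integrable_const_bound[where B=1]) (auto simp: abs_mult intro!: borel_measurable_times mg)
  have ih: "integrable (Noise e) (\<lambda>x. pm (h (\<lambda>i. fst (x i))) * pm (h (\<lambda>i. snd (x i))))"
    by (rule N.integrable_const_bound[where B=1]) (auto simp: abs_mult intro!: borel_measurable_times mh)
  have indm: "(\<lambda>x. indicator D (\<lambda>i. p (x i)) :: real) \<in> borel_measurable (Noise e)" for p :: "bool \<times> bool \<Rightarrow> bool"
    using D by (intro measurable_compose[OF proj_meas]) auto
  have iind: "integrable (Noise e) (\<lambda>x. indicator D (\<lambda>i. p (x i)) :: real)" for p :: "bool \<times> bool \<Rightarrow> bool"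
    by (rule N.integrable_const_bound[where B=1]) (auto intro: indm)
  have "(\<integral>x. pm (g (\<lambda>i. fst (x i))) * pm (g (\<lambda>i. snd (x i))) \<partial>Noise e)
        - (\<integral>x. pm (h (\<lambda>i. fst (x i))) * pm (h (\<lambda>i. snd (x i))) \<partial>Noise e)
      = (\<integral>x. pm (g (\<lambda>i. fst (x i))) * pm (g (\<lambda>i. snd (x i))) - pm (h (\<lambda>i. fst (x i))) * pm (h (\<lambda>i. snd (x i))) \<partial>Noise e)"
    using ig ih by (rule Bochner_Integration.integral_diff[symmetric])
  also have "\<bar>\<dots>\<bar> \<le> (\<integral>x. \<bar>pm (g (\<lambda>i. fst (x i))) * pm (g (\<lambda>i. snd (x i))) - pm (h (\<lambda>i. fst (x i))) * pm (h (\<lambda>i. snd (x i)))\<bar> \<partial>Noise e)"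
    by (rule integral_abs_bound)
  also have "\<dots> \<le> (\<integral>x. 2 * indicator D (\<lambda>i. fst (x i)) + 2 * indicator D (\<lambda>i. snd (x i)) \<partial>Noise e)"
  proof (rule integral_mono)
    show "integrable (Noise e) (\<lambda>x. \<bar>pm (g (\<lambda>i. fst (x i))) * pm (g (\<lambda>i. snd (x i))) - pm (h (\<lambda>i. fst (x i))) * pm (h (\<lambda>i. snd (x i)))\<bar>)"
      using ig ih by auto
    show "integrable (Noise e) (\<lambda>x. 2 * indicator D (\<lambda>i. fst (x i)) + 2 * indicator D (\<lambda>i. snd (x i)) :: real)"
      using iind by auto
    fix x :: "nat \<Rightarrow> bool \<times> bool"
    show "\<bar>pm (g (\<lambda>i. fst (x i))) * pm (g (\<lambda>i. snd (x i))) - pm (h (\<lambda>i. fst (x i))) * pm (h (\<lambda>i. snd (x i)))\<bar>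
          \<le> 2 * indicator D (\<lambda>i. fst (x i)) + 2 * indicator D (\<lambda>i. snd (x i))"
      using pw2[of "g (\<lambda>i. fst (x i))" "g (\<lambda>i. snd (x i))" "h (\<lambda>i. fst (x i))" "h (\<lambda>i. snd (x i))"]
        ind_ge[OF sub, of "\<lambda>i. fst (x i)"] ind_ge[OF sub, of "\<lambda>i. snd (x i)"] by linarith
  qed
  also have "\<dots> = 2 * (\<integral>x. indicator D (\<lambda>i. fst (x i)) \<partial>Noise e) + 2 * (\<integral>x. indicator D (\<lambda>i. snd (x i)) \<partial>Noise e)"
    using iind by simp
  also have "\<dots> = 4 * measure Omega D"
    using int_ind_proj[OF D map_fst_noise] int_ind_proj[OF D map_snd_noise] by simp
  finally show ?thesis .
qed

lemma corr_close:
  assumes g: "boolean_fun g" and h: "boolean_fun h" and D: "D \<in> sets Omega"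
    and sub: "\<forall>\<omega>. g \<omega> \<noteq> h \<omega> \<longrightarrow> \<omega> \<in> D"
  shows "\<bar>corr e g - corr e h\<bar> \<le> 8 * measure Omega D"
proof -
  define a where "a = (\<integral>\<omega>. pm (g \<omega>) \<partial>Omega)"
  define b where "b = (\<integral>\<omega>. pm (h \<omega>) \<partial>Omega)"
  have ab: "\<bar>a - b\<bar> \<le> 2 * measure Omega D" unfolding a_def b_def by (rule exp_close[OF g h D sub])
  have "\<bar>a + b\<bar> \<le> 2" using abs_int_pm[of g] abs_int_pm[of h] unfolding a_def b_def by linarith
  then have "\<bar>a - b\<bar> * \<bar>a + b\<bar> \<le> (2 * measure Omega D) * 2"
    using ab by (intro mult_mono) auto
  moreover have "a\<^sup>2 - b\<^sup>2 = (a - b) * (a + b)" by (simp add: power2_eq_square algebra_simps)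
  ultimately have "\<bar>a\<^sup>2 - b\<^sup>2\<bar> \<le> 2 * measure Omega D * 2" by (simp add: abs_mult)
  moreover note noise_close[OF g h D sub, of e]
  ultimately show ?thesis unfolding corr_def a_def[symmetric] b_def[symmetric] by linarith
qed



definition Ec :: "((nat \<Rightarrow> bool) \<Rightarrow> bool) \<Rightarrow> nat \<Rightarrow> (nat \<Rightarrow> bool) set" where
  "Ec f m = space Omega - {\<omega>. \<exists>W\<subseteq>{..<m}. witness_set f W \<omega>}"

lemma Ec_sets: "boolean_fun f \<Longrightarrow> Ec f m \<in> sets Omega"
  unfolding Ec_def by (intro sets.Diff sets.top E_sets)

lemma B_diff: "\<forall>\<omega>. B m f \<omega> \<noteq> f \<omega> \<longrightarrow> \<omega> \<in> Ec f m"
  by (auto simp: B_alt Ec_def)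

lemma Ec_mono: "m \<le> m' \<Longrightarrow> Ec f m' \<subseteq> Ec f m"
  unfolding Ec_def by (auto dest: order.trans[OF _ lessThan_subset_iff[THEN iffD2]])

lemma p_lim:
  assumes bf: "boolean_fun f" and fin: "finitary f"
  shows "(\<lambda>m. measure Omega (Ec f m)) \<longlonglongrightarrow> 0"
proof -
  have "(\<lambda>m. measure Omega (Ec f m)) \<longlonglongrightarrow> measure Omega (\<Inter>m. Ec f m)"
  proof (rule PW.finite_Lim_measure_decseq)
    show "range (Ec f) \<subseteq> sets Omega" using Ec_sets[OF bf] by auto
    show "decseq (Ec f)" by (rule decseq_SucI) (rule Ec_mono, simp)
  qed
  moreover have "measure Omega (\<Inter>m. Ec f m) = 0"
  proof -
    from fin obtain N where N: "{x \<in> space Omega. \<not> (\<exists>W. finite W \<and> witness_set f W x)} \<subseteq> N"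
      "emeasure Omega N = 0" "N \<in> sets Omega"
      unfolding finitary_def by (rule AE_E)
    have "(\<Inter>m. Ec f m) \<subseteq> N"
    proof
      fix \<omega> assume a: "\<omega> \<in> (\<Inter>m. Ec f m)"
      have "\<not> (\<exists>W. finite W \<and> witness_set f W \<omega>)"
      proof
        assume "\<exists>W. finite W \<and> witness_set f W \<omega>"
        then obtain W k where "W \<subseteq> {..<k}" "witness_set f W \<omega>" using finite_nat_iff_bounded by blast
        then have "\<omega> \<notin> Ec f k" unfolding Ec_def by blast
        with a show False by blast
      qed
      then show "\<omega> \<in> N" using N(1) by auto
    qed
    then have "measure Omega (\<Inter>m. Ec f m) \<le> measure Omega N"
      using N(3) by (intro PW.finite_measure_mono) auto
    moreover have "measure Omega N = 0" using N(2) by (simp add: measure_def)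
    ultimately show ?thesis using measure_nonneg[of Omega "\<Inter>m. Ec f m"] by linarith
  qed
  ultimately show ?thesis by simp
qed

lemma conv:
  fixes X Y :: "nat \<Rightarrow> real"
  assumes X: "X \<longlonglongrightarrow> 0" and d: "\<And>n. \<bar>Y n - X n\<bar> \<le> 8 * inverse (real (Suc n))"
  shows "Y \<longlonglongrightarrow> 0"
proof -
  have "(\<lambda>n. Y n - X n) \<longlonglongrightarrow> 0"
  proof (rule Lim_null_comparison)
    show "\<forall>\<^sub>F n in sequentially. norm (Y n - X n) \<le> 8 * inverse (real (Suc n))" using d by simp
    show "(\<lambda>n. 8 * inverse (real (Suc n))) \<longlonglongrightarrow> 0"
      using tendsto_mult_right_zero[OF LIMSEQ_inverse_real_of_nat, of 8] by simp
  qed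
  from tendsto_add[OF X this] show ?thesis by simp
qed

theorem mainTheorem9:
  fixes f :: "nat \<Rightarrow> (nat \<Rightarrow> bool) \<Rightarrow> bool"
  assumes "\<And>n. boolean_fun (f n)"
    and "\<And>n. finitary (f n)"
  shows "(\<exists>r :: nat \<Rightarrow> nat. filterlim r at_top sequentially \<and>
            (\<forall>m :: nat \<Rightarrow> nat. (\<forall>n. r n \<le> m n) \<longrightarrow>
               noise_sensitive (\<lambda>n. B (m n) (f n))))
         \<longleftrightarrow> noise_sensitive f"
proof -
  have "\<forall>n. \<exists>M. \<forall>m\<ge>M. measure Omega (Ec (f n) m) < inverse (real (Suc n))"
  proof
    fix n
    have "eventually (\<lambda>m. measure Omega (Ec (f n) m) < inverse (real (Suc n))) sequentially"
      by (rule order_tendstoD(2)[OF p_lim[OF assms(1,2)]]) simp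
    then show "\<exists>M. \<forall>m\<ge>M. measure Omega (Ec (f n) m) < inverse (real (Suc n))"
      by (simp add: eventually_sequentially)
  qed
  then obtain M where M: "\<And>n m. M n \<le> m \<Longrightarrow> measure Omega (Ec (f n) m) < inverse (real (Suc n))"
    by metis
  have close: "\<bar>corr e (B m (f n)) - corr e (f n)\<bar> \<le> 8 * inverse (real (Suc n))" if "M n \<le> m" for e m n
  proof -
    have "\<bar>corr e (B m (f n)) - corr e (f n)\<bar> \<le> 8 * measure Omega (Ec (f n) m)"
      by (rule corr_close[OF B_meas[OF assms(1)] assms(1) Ec_sets[OF assms(1)] B_diff])
    also have "\<dots> \<le> 8 * inverse (real (Suc n))" using M[OF that] by simp
    finally show ?thesis .
  qed
  show ?thesis
  proof
    assume "\<exists>r :: nat \<Rightarrow> nat. filterlim r at_top sequentially \<and>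
            (\<forall>m :: nat \<Rightarrow> nat. (\<forall>n. r n \<le> m n) \<longrightarrow> noise_sensitive (\<lambda>n. B (m n) (f n)))"
    then obtain r :: "nat \<Rightarrow> nat" where r: "\<forall>m :: nat \<Rightarrow> nat. (\<forall>n. r n \<le> m n) \<longrightarrow> noise_sensitive (\<lambda>n. B (m n) (f n))"
      by blast
    define m where "m n = max (r n) (M n)" for n
    have ns: "noise_sensitive (\<lambda>n. B (m n) (f n))" using r by (simp add: m_def)
    show "noise_sensitive f" unfolding ns_corr
    proof (intro allI impI)
      fix e :: real assume e: "0 < e \<and> e \<le> 1"
      have "(\<lambda>n. corr e (B (m n) (f n))) \<longlonglongrightarrow> 0" using ns e unfolding ns_corr by auto
      then show "(\<lambda>n. corr e (f n)) \<longlonglongrightarrow> 0"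
      proof (rule conv)
        fix n show "\<bar>corr e (f n) - corr e (B (m n) (f n))\<bar> \<le> 8 * inverse (real (Suc n))"
          using close[of n "m n" e] by (simp add: m_def abs_minus_commute)
      qed
    qed
  next
    assume ns: "noise_sensitive f"
    define r where "r n = M n + n" for n
    show "\<exists>r :: nat \<Rightarrow> nat. filterlim r at_top sequentially \<and>
            (\<forall>m :: nat \<Rightarrow> nat. (\<forall>n. r n \<le> m n) \<longrightarrow> noise_sensitive (\<lambda>n. B (m n) (f n)))"
    proof (intro exI conjI allI impI)
      show "filterlim r at_top sequentially"
        by (rule filterlim_at_top_mono[OF filterlim_ident]) (simp add: r_def)
      fix m :: "nat \<Rightarrow> nat" assume rm: "\<forall>n. r n \<le> m n"
      show "noise_sensitive (\<lambda>n. B (m n) (f n))" unfolding ns_corr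
      proof (intro allI impI)
        fix e :: real assume e: "0 < e \<and> e \<le> 1"
        have "(\<lambda>n. corr e (f n)) \<longlonglongrightarrow> 0" using ns e unfolding ns_corr by auto
        then show "(\<lambda>n. corr e (B (m n) (f n))) \<longlonglongrightarrow> 0"
        proof (rule conv)
          fix n have "M n \<le> m n" using rm[rule_format, of n] by (simp add: r_def)
          then show "\<bar>corr e (B (m n) (f n)) - corr e (f n)\<bar> \<le> 8 * inverse (real (Suc n))"
            by (rule close)
        qed
      qed
    qed
  qed
qed


end
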